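(* Let $\mathcal{P}$ be a profile of unrooted phylogenetic trees whose display graph $G(\mathcal{P})$ is connected, let $S$ be an agreement supertree of $\mathcal{P}$, and let $\Psi$ be the cut function of $S$. Then (i) for every edge $e\in E(S)$, $\Psi(e)$ is a cut of $G(\mathcal{P})$; and (ii) for every edge $e\in E(S)$, $\Psi(e)$ is a minimal cut of $G(\mathcal{P})$ if and only if $G(\mathcal{P})-\Psi(e)$ has exactly two connected components.
   Context: A phylogenetic tree $T$ is an unrooted tree whose leaves are bijectively labeled by $\mathcal{L}(T)$ (leaves identified with labels; internal vertices have degree at least three). A profile $\mathcal{P}=\{T_1,\dots,T_k\}$ is a finite collection of phylogenetic trees (input trees), $\mathcal{L}(\mathcal{P})=\bigcup_i\mathcal{L}(T_i)$; internal vertices of distinct trees are disjoint, while leaves with the same label are the same vertex. The display graph $G(\mathcal{P})$ has vertex set $\bigcup_i V(T_i)$ and edge set $\bigcup_i E(T_i)$. For phylogenetic trees $S,T$ with $\mathcal{L}(T)\subseteq\mathcal{L}(S)$, $S_{|\mathcal{L}(T)}$ is obtained from the minimal subtree of $S$ connecting the leaves in $\mathcal{L}(T)$ by suppressing degree-two vertices; $S$ and $T$ agree if $S_{|\mathcal{L}(T)}$ is label-preservingly isomorphic to $T$. An agreement supertree of $\mathcal{P}$ is a phylogenetic tree with label set $\mathcal{L}(\mathcal{P})$ agreeing with every tree of $\mathcal{P}$. Cut function: for an agreement supertree $S$ and an edge $e=\{u,v\}$ of $S$, let $L_u$, $L_v$ be the label sets of the subtrees of $S-e$ containing $u$ and $v$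 respectively. For an input tree $T$ with $\mathcal{L}(T)\cap L_u\neq\emptyset$ and $\mathcal{L}(T)\cap L_v\neq\emptyset$, there is a unique edge $f$ of $T$ whose deletion separates $\mathcal{L}(T)$ into $\mathcal{L}(T)\cap L_u$ and $\mathcal{L}(T)\cap L_v$; $e$ is called the agreement edge of $S$ corresponding to $f$. The cut function $\Psi$ maps each $e\in E(S)$ to the set $\Psi(e)$ of all edges $f$ of input trees such that $e$ is the agreement edge corresponding to $f$ (input trees whose labels lie entirely in $L_u$ or entirely in $L_v$ contribute no edge). A cut of a connected graph $G$ is $F\subseteq E(G)$ with $G-F$ (same vertices, edges of $F$ removed) disconnected; minimal if no proper subset is a cut. *)

theory Defs
  imports Main
begin

text \<open>Graphs are given by a vertex set and a set of edges, each edge a two-element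
set of vertices. A tree is a pair (V, E). Leaves are identified with labels.\<close>

type_synonym 'v graph = "'v set \<times> 'v set set"

definition is_path :: "'v set set \<Rightarrow> 'v list \<Rightarrow> 'v \<Rightarrow> 'v \<Rightarrow> bool" where
  "is_path E p a b \<longleftrightarrow> p \<noteq> [] \<and> hd p = a \<and> last p = b \<and> distinct p \<and>
     (\<forall>i. Suc i < length p \<longrightarrow> {p ! i, p ! Suc i} \<in> E)"

definition is_cycle :: "'v set set \<Rightarrow> 'v list \<Rightarrow> bool" where
  "is_cycle E p \<longleftrightarrow> length p \<ge> 3 \<and> is_path E p (hd p) (last p) \<and> {last p, hd p} \<in> E"

definition reach :: "'v set set \<Rightarrow> 'v \<Rightarrow> 'v \<Rightarrow> bool" where
  "reach E x y \<longleftrightarrow> (x, y) \<in> {(a, b). {a, b} \<in> E}\<^sup>*"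

definition wf_graph :: "'v set \<Rightarrow> 'v set set \<Rightarrow> bool" where
  "wf_graph V E \<longleftrightarrow> (\<forall>e\<in>E. \<exists>a b. e = {a, b} \<and> a \<noteq> b \<and> a \<in> V \<and> b \<in> V)"

definition connected_graph :: "'v set \<Rightarrow> 'v set set \<Rightarrow> bool" where
  "connected_graph V E \<longleftrightarrow> V \<noteq> {} \<and> (\<forall>x\<in>V. \<forall>y\<in>V. reach E x y)"

definition components :: "'v set \<Rightarrow> 'v set set \<Rightarrow> 'v set set" where
  "components V E = {{y \<in> V. reach E x y} | x. x \<in> V}"

definition degree :: "'v set set \<Rightarrow> 'v \<Rightarrow> nat" where
  "degree E v = card {e \<in> E. v \<in> e}"

definition is_tree :: "'v set \<Rightarrow> 'v set set \<Rightarrow> bool" where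
  "is_tree V E \<longleftrightarrow> finite V \<and> wf_graph V E \<and> connected_graph V E \<and> (\<nexists>p. is_cycle E p)"

definition leaves :: "'v graph \<Rightarrow> 'v set" where
  "leaves T = {v \<in> fst T. degree (snd T) v \<le> 1}"

definition phylo_tree :: "'v graph \<Rightarrow> bool" where
  "phylo_tree T \<longleftrightarrow> is_tree (fst T) (snd T) \<and>
     (\<forall>v\<in>fst T. v \<notin> leaves T \<longrightarrow> degree (snd T) v \<ge> 3)"

definition profile :: "'v graph set \<Rightarrow> bool" where
  "profile P \<longleftrightarrow> finite P \<and> (\<forall>T\<in>P. phylo_tree T) \<and>
     (\<forall>T1\<in>P. \<forall>T2\<in>P. T1 \<noteq> T2 \<longrightarrow> fst T1 \<inter> fst T2 \<subseteq> leaves T1 \<inter> leaves T2)"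

definition labels :: "'v graph set \<Rightarrow> 'v set" where
  "labels P = (\<Union>T\<in>P. leaves T)"

definition dg_V :: "'v graph set \<Rightarrow> 'v set" where
  "dg_V P = (\<Union>T\<in>P. fst T)"

definition dg_E :: "'v graph set \<Rightarrow> 'v set set" where
  "dg_E P = (\<Union>T\<in>P. snd T)"

definition min_sub_V :: "'v graph \<Rightarrow> 'v set \<Rightarrow> 'v set" where
  "min_sub_V S X = {w. \<exists>a\<in>X. \<exists>b\<in>X. \<exists>p. is_path (snd S) p a b \<and> w \<in> set p}"

definition min_sub_E :: "'v graph \<Rightarrow> 'v set \<Rightarrow> 'v set set" where
  "min_sub_E S X = {e. \<exists>a\<in>X. \<exists>b\<in>X. \<exists>p. is_path (snd S) p a b \<and>
      (\<exists>i. Suc i < length p \<and> e = {p ! i, p ! Suc i})}"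

text \<open>Restriction S|X: minimal subtree with degree-two vertices suppressed.\<close>
definition restrict_V :: "'v graph \<Rightarrow> 'v set \<Rightarrow> 'v set" where
  "restrict_V S X = {w \<in> min_sub_V S X. degree (min_sub_E S X) w \<noteq> 2}"

definition restrict_E :: "'v graph \<Rightarrow> 'v set \<Rightarrow> 'v set set" where
  "restrict_E S X = {{a, b} | a b. a \<in> restrict_V S X \<and> b \<in> restrict_V S X \<and> a \<noteq> b \<and>
      (\<exists>p. is_path (min_sub_E S X) p a b \<and>
           (\<forall>w\<in>set p. w \<noteq> a \<and> w \<noteq> b \<longrightarrow> degree (min_sub_E S X) w = 2))}"

definition agrees :: "'v graph \<Rightarrow> 'v graph \<Rightarrow> bool" where
  "agrees S T \<longleftrightarrow> leaves T \<subseteq> leaves S \<and>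
     (\<exists>\<phi>. bij_betw \<phi> (restrict_V S (leaves T)) (fst T) \<and> (\<forall>x\<in>leaves T. \<phi> x = x) \<and>
        (\<forall>a\<in>restrict_V S (leaves T). \<forall>b\<in>restrict_V S (leaves T).
            {a, b} \<in> restrict_E S (leaves T) \<longleftrightarrow> {\<phi> a, \<phi> b} \<in> snd T))"

definition agreement_supertree :: "'v graph set \<Rightarrow> 'v graph \<Rightarrow> bool" where
  "agreement_supertree P S \<longleftrightarrow> phylo_tree S \<and> leaves S = labels P \<and> (\<forall>T\<in>P. agrees S T)"

definition side_labels :: "'v graph \<Rightarrow> 'v set \<Rightarrow> 'v \<Rightarrow> 'v set" where
  "side_labels T e x = {y \<in> leaves T. reach (snd T - {e}) x y}"

definition Psi :: "'v graph set \<Rightarrow> 'v graph \<Rightarrow> 'v set \<Rightarrow> 'v set set" where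
  "Psi P S e = {f. \<exists>T\<in>P. f \<in> snd T \<and> (\<exists>u v a b. e = {u, v} \<and> f = {a, b} \<and>
      leaves T \<inter> side_labels S e u \<noteq> {} \<and> leaves T \<inter> side_labels S e v \<noteq> {} \<and>
      side_labels T f a = leaves T \<inter> side_labels S e u \<and>
      side_labels T f b = leaves T \<inter> side_labels S e v)}"

definition is_cut :: "'v set \<Rightarrow> 'v set set \<Rightarrow> 'v set set \<Rightarrow> bool" where
  "is_cut V E F \<longleftrightarrow> F \<subseteq> E \<and> \<not> connected_graph V (E - F)"

definition is_min_cut :: "'v set \<Rightarrow> 'v set set \<Rightarrow> 'v set set \<Rightarrow> bool" where
  "is_min_cut V E F \<longleftrightarrow> is_cut V E F \<and> (\<forall>F'. F' \<subset> F \<longrightarrow> \<not> is_cut V E F')"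

end

theory Submission
  imports Defs
begin

lemma reach_refl[simp]: "reach E x x"
  by (simp add: reach_def)

lemma reach_edge: "{a,b} \<in> E \<Longrightarrow> reach E a b"
  unfolding reach_def by (rule r_into_rtrancl) simp

lemma reach_trans: "reach E a b \<Longrightarrow> reach E b c \<Longrightarrow> reach E a c"
  unfolding reach_def by (rule rtrancl_trans)

lemma reach_step: "reach E a b \<Longrightarrow> {b,c} \<in> E \<Longrightarrow> reach E a c"
  using reach_trans reach_edge by metis

lemma reach_sym: "reach E a b \<Longrightarrow> reach E b a"
  unfolding reach_def
proof (induct rule: rtrancl_induct)
  case base then show ?case by simp
next
  case (step y z)
  then have "(z, y) \<in> {(a, b). {a, b} \<in> E}" by (simp add: insert_commute)
  then show ?case using step(3) by (rule converse_rtrancl_into_rtrancl)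
qed

lemma reach_induct[consumes 1, case_names base step]:
  assumes "reach E a b" "P a" "\<And>y z. reach E a y \<Longrightarrow> {y,z} \<in> E \<Longrightarrow> P y \<Longrightarrow> P z"
  shows "P b"
  using assms(1) unfolding reach_def
proof (induct rule: rtrancl_induct)
  case base then show ?case using assms(2) by simp
next
  case (step y z) then show ?case using assms(3)[of y z] by (auto simp: reach_def)
qed

lemma reach_mono: "reach E a b \<Longrightarrow> E \<subseteq> E' \<Longrightarrow> reach E' a b"
  by (induct rule: reach_induct) (auto intro: reach_step)

lemma split2:
  assumes "reach E s z" "E \<subseteq> E' \<union> {{a,b}}"
  shows "reach E' s z \<or> reach E' s a \<or> reach E' s b"
  using assms(1)
proof (induct rule: reach_induct)
  case base then show ?case by simp
next
  case (step y z)
  show ?case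
  proof (cases "{y,z} = {a,b}")
    case True
    then have "y = a \<or> y = b" "z = a \<or> z = b" by (auto simp: doubleton_eq_iff)
    with step(3) show ?thesis by auto
  next
    case False
    then have "{y,z} \<in> E'" using step(2) assms(2) by auto
    with step(3) show ?thesis using reach_step by metis
  qed
qed

definition pathE :: "'v set set \<Rightarrow> 'v list \<Rightarrow> bool" where
  "pathE E p \<longleftrightarrow> p \<noteq> [] \<and> distinct p \<and> (\<forall>i. Suc i < length p \<longrightarrow> {p ! i, p ! Suc i} \<in> E)"

lemma is_path_iff: "is_path E p a b \<longleftrightarrow> pathE E p \<and> hd p = a \<and> last p = b"
  unfolding is_path_def pathE_def by auto

lemma pathE_reach: "pathE E p \<Longrightarrow> reach E (hd p) (last p)"
proof (induct p)
  case Nil then show ?case by (simp add: pathE_def)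
next
  case (Cons x p)
  show ?case
  proof (cases p)
    case Nil then show ?thesis by simp
  next
    case (Cons y q)
    have pe: "pathE E p" using Cons.prems unfolding pathE_def \<open>p = y # q\<close> by fastforce
    have "{x, y} \<in> E" using Cons.prems unfolding pathE_def \<open>p = y # q\<close> by (metis length_Cons nth_Cons_0 nth_Cons_Suc zero_less_Suc Suc_less_eq)
    then have "reach E x (hd p)" using Cons by (simp add: reach_edge)
    then show ?thesis using Cons.hyps[OF pe] reach_trans \<open>p = y # q\<close> by fastforce
  qed
qed

lemma pathE_mono: "pathE E p \<Longrightarrow> E \<subseteq> E' \<Longrightarrow> pathE E' p"
  unfolding pathE_def by blast

lemma pathE_rev: "pathE E p \<Longrightarrow> pathE E (rev p)"
  unfolding pathE_def
proof (intro conjI allI impI)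
  fix i assume h: "p \<noteq> [] \<and> distinct p \<and> (\<forall>i. Suc i < length p \<longrightarrow> {p ! i, p ! Suc i} \<in> E)"
    and i: "Suc i < length (rev p)"
  let ?n = "length p"
  have "Suc (?n - Suc (Suc i)) < ?n" using i by simp
  then have "{p ! (?n - Suc (Suc i)), p ! Suc (?n - Suc (Suc i))} \<in> E" using h by blast
  moreover have "Suc (?n - Suc (Suc i)) = ?n - Suc i" using i by simp
  ultimately show "{rev p ! i, rev p ! Suc i} \<in> E" using i
    by (simp add: rev_nth insert_commute)
qed auto

lemma pathE_take: "pathE E p \<Longrightarrow> 0 < n \<Longrightarrow> pathE E (take n p)"
  unfolding pathE_def by (auto simp: nth_take)

lemma pathE_drop: "pathE E p \<Longrightarrow> n < length p \<Longrightarrow> pathE E (drop n p)"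
  unfolding pathE_def by (auto simp: nth_drop add.commute[of _ n])

lemma pathE_snoc: "pathE E p \<Longrightarrow> z \<notin> set p \<Longrightarrow> {last p, z} \<in> E \<Longrightarrow> pathE E (p @ [z])"
  unfolding pathE_def
proof (intro conjI allI impI)
  fix i assume h: "p \<noteq> [] \<and> distinct p \<and> (\<forall>i. Suc i < length p \<longrightarrow> {p ! i, p ! Suc i} \<in> E)"
    and z: "z \<notin> set p" "{last p, z} \<in> E" and i: "Suc i < length (p @ [z])"
  show "{(p @ [z]) ! i, (p @ [z]) ! Suc i} \<in> E"
  proof (cases "Suc i < length p")
    case True then show ?thesis using h by (simp add: nth_append)
  next
    case False
    then have "i = length p - Suc 0" using i by simp
    then show ?thesis using z h by (simp add: nth_append last_conv_nth)
  qed
qed auto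

lemma pathE_Cons: "pathE E p \<Longrightarrow> z \<notin> set p \<Longrightarrow> {z, hd p} \<in> E \<Longrightarrow> pathE E (z # p)"
  unfolding pathE_def
proof (intro conjI allI impI)
  fix i assume h: "p \<noteq> [] \<and> distinct p \<and> (\<forall>i. Suc i < length p \<longrightarrow> {p ! i, p ! Suc i} \<in> E)"
    and z: "z \<notin> set p" "{z, hd p} \<in> E" and i: "Suc i < length (z # p)"
  show "{(z # p) ! i, (z # p) ! Suc i} \<in> E"
  proof (cases i)
    case 0 then show ?thesis using z h by (simp add: hd_conv_nth)
  next
    case (Suc j) then show ?thesis using h i by simp
  qed
qed auto

lemma reach_path: "reach E a b \<Longrightarrow> \<exists>p. pathE E p \<and> hd p = a \<and> last p = b"
proof (induct rule: reach_induct)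
  case base then show ?case by (intro exI[of _ "[a]"]) (simp add: pathE_def)
next
  case (step y z)
  then obtain p where p: "pathE E p" "hd p = a" "last p = y" by blast
  show ?case
  proof (cases "z \<in> set p")
    case True
    then obtain k where k: "k < length p" "p ! k = z" by (meson in_set_conv_nth)
    have "pathE E (take (Suc k) p)" using p by (simp add: pathE_take)
    moreover have "hd (take (Suc k) p) = a" using p k
      by (metis hd_take zero_less_Suc)
    moreover have "last (take (Suc k) p) = z" using k
      by (simp add: take_Suc_conv_app_nth)
    ultimately show ?thesis by blast
  next
    case False
    have "pathE E (p @ [z])" using pathE_snoc[OF p(1) False] p step by simp
    moreover have "hd (p @ [z]) = a" using p by (simp add: pathE_def)
    ultimately show ?thesis by auto
  qed
qed


lemma wf_edge: "wf_graph V E \<Longrightarrow> g \<in> E \<Longrightarrow> \<exists>a b. g = {a,b} \<and> a \<noteq> b \<and> a \<in> V \<and> b \<in> V"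
  unfolding wf_graph_def by blast

lemma wf_edge2: "wf_graph V E \<Longrightarrow> {a,b} \<in> E \<Longrightarrow> a \<noteq> b \<and> a \<in> V \<and> b \<in> V"
  unfolding wf_graph_def by (metis doubleton_eq_iff)

lemma wf_finite: "wf_graph V E \<Longrightarrow> finite V \<Longrightarrow> finite E"
proof -
  assume w: "wf_graph V E" and f: "finite V"
  have "E \<subseteq> Pow V" using w unfolding wf_graph_def by auto
  then show ?thesis using f by (meson finite_Pow_iff rev_finite_subset)
qed

lemma wf_mono: "wf_graph V E \<Longrightarrow> E' \<subseteq> E \<Longrightarrow> wf_graph V E'"
  unfolding wf_graph_def by blast

lemma reach_in_V: assumes "wf_graph V E" "reach E a b" "a \<in> V" shows "b \<in> V"
  using assms(2) by (induct rule: reach_induct) (auto dest: wf_edge2[OF assms(1)] simp: assms(3))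

lemma tree_sep:
  assumes "is_tree V E" "{a,b} \<in> E"
  shows "\<not> reach (E - {{a,b}}) a b"
proof
  assume r: "reach (E - {{a,b}}) a b"
  have ab: "a \<noteq> b" using assms wf_edge2 unfolding is_tree_def by metis
  obtain p where p: "pathE (E - {{a,b}}) p" "hd p = a" "last p = b" using reach_path[OF r] by blast
  have ne: "p \<noteq> []" using p unfolding pathE_def by auto
  have l1: "length p \<noteq> 1"
  proof
    assume "length p = 1" then obtain x where "p = [x]" by (metis One_nat_def length_0_conv length_Suc_conv)
    then show False using p ab by simp
  qed
  have l2: "length p \<noteq> 2"
  proof
    assume "length p = 2" then obtain x y where "p = [x,y]"
      by (metis One_nat_def length_0_conv length_Suc_conv numeral_2_eq_2)
    then have "{a,b} \<in> E - {{a,b}}" using p unfolding pathE_def by force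
    then show False by simp
  qed
  have "length p \<ge> 3" using ne l1 l2 by (cases "length p"; cases "length p - 1") auto
  moreover have "is_path E p (hd p) (last p)" using pathE_mono[OF p(1)] by (auto simp: is_path_iff)
  moreover have "{last p, hd p} \<in> E" using p assms by (simp add: insert_commute)
  ultimately have "is_cycle E p" unfolding is_cycle_def by blast
  then show False using assms unfolding is_tree_def by blast
qed

lemma two_leaf_edge:
  assumes "wf_graph V E" "finite E" "connected_graph V E" "{a,b} \<in> E" "degree E a \<le> 1" "degree E b \<le> 1"
  shows "E = {{a,b}}"
proof -
  have one: "\<And>x g. x \<in> {a,b} \<Longrightarrow> g \<in> E \<Longrightarrow> x \<in> g \<Longrightarrow> g = {a,b}"
  proof -
    fix x g assume x: "x \<in> {a,b}" and g: "g \<in> E" "x \<in> g"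
    have "card {e \<in> E. x \<in> e} \<le> Suc 0" using x assms unfolding degree_def by auto
    then have "\<forall>s\<in>{e \<in> E. x \<in> e}. \<forall>t\<in>{e \<in> E. x \<in> e}. s = t"
      using card_le_Suc0_iff_eq assms(2) by (metis (no_types, lifting) finite_subset mem_Collect_eq subsetI)
    then show "g = {a,b}" using g x assms(4) by auto
  qed
  have av: "a \<in> V" using wf_edge2[OF assms(1,4)] by blast
  have V: "\<And>z. z \<in> V \<Longrightarrow> z \<in> {a,b}"
  proof -
    fix z assume "z \<in> V"
    then have "reach E a z" using assms(3) av unfolding connected_graph_def by blast
    then show "z \<in> {a,b}"
    proof (induct rule: reach_induct)
      case base then show ?case by simp
    next
      case (step y z) then have "{y,z} = {a,b}" using one by blast
      then show ?case by (auto simp: doubleton_eq_iff)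
    qed
  qed
  show ?thesis
  proof
    show "E \<subseteq> {{a,b}}"
    proof
      fix g assume g: "g \<in> E"
      then obtain x y where "g = {x,y}" "x \<in> V" using wf_edge[OF assms(1)] by blast
      then show "g \<in> {{a,b}}" using one[of x g] V g by auto
    qed
  qed (use assms in auto)
qed


lemma cyc_drop:
  assumes "pathE E p" "Suc (Suc i) < length p" "{last p, p ! i} \<in> E"
  shows "is_cycle E (drop i p)"
proof -
  have "pathE E (drop i p)" using pathE_drop assms by fastforce
  moreover have "hd (drop i p) = p ! i" using assms by (simp add: hd_drop_conv_nth)
  moreover have "last (drop i p) = last p" using assms by simp
  ultimately show ?thesis unfolding is_cycle_def using assms by (auto simp: is_path_iff)
qed

lemma cyc_take:
  assumes "pathE E p" "2 \<le> i" "i < length p" "{p ! i, hd p} \<in> E"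
  shows "is_cycle E (take (Suc i) p)"
proof -
  have "pathE E (take (Suc i) p)" using pathE_take assms by fastforce
  moreover have "hd (take (Suc i) p) = hd p" by (metis hd_take zero_less_Suc)
  moreover have "last (take (Suc i) p) = p ! i" using assms by (simp add: take_Suc_conv_app_nth)
  ultimately show ?thesis unfolding is_cycle_def using assms by (auto simp: is_path_iff)
qed

lemma edge_other: "wf_graph V E \<Longrightarrow> g \<in> E \<Longrightarrow> t \<in> g \<Longrightarrow> \<exists>z. g = {t,z} \<and> z \<noteq> t"
  by (drule (1) wf_edge) (auto simp: insert_commute)

lemma leaf_reach:
  assumes ph: "phylo_tree T" and D: "D \<subseteq> snd T" "card D \<le> 2" and w: "w \<in> fst T"
  shows "\<exists>l\<in>leaves T. reach (snd T - D) w l"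
proof (rule ccontr)
  assume nl: "\<not> (\<exists>l\<in>leaves T. reach (snd T - D) w l)"
  define V where "V = fst T"
  define E where "E = snd T"
  have tr: "is_tree V E" using ph unfolding phylo_tree_def V_def E_def by auto
  have wfE: "wf_graph V E" and fV: "finite V" using tr unfolding is_tree_def by auto
  have fE: "finite E" using wf_finite wfE fV by blast
  have fD: "finite D" using D fE E_def finite_subset by blast
  have wfED: "wf_graph V (E - D)" using wf_mono wfE by blast
  define C where "C = {z. reach (E - D) w z}"
  have CV: "C \<subseteq> V" using reach_in_V[OF wfED] w unfolding C_def V_def by blast
  have deg: "\<And>z. z \<in> C \<Longrightarrow> degree E z \<ge> 3"
  proof -
    fix z assume z: "z \<in> C"
    then have "z \<notin> leaves T" using nl unfolding C_def E_def by blast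
    then show "degree E z \<ge> 3" using ph z CV unfolding phylo_tree_def V_def E_def by blast
  qed
  define Q where "Q p \<longleftrightarrow> pathE (E - D) p \<and> set p \<subseteq> C" for p
  have Qw: "Q [w]" unfolding Q_def C_def pathE_def by simp
  have bnd: "\<forall>p. Q p \<longrightarrow> length p < Suc (card V)"
  proof (intro allI impI)
    fix p assume "Q p"
    then have "distinct p" "set p \<subseteq> V" using CV unfolding Q_def pathE_def by auto
    then show "length p < Suc (card V)" using fV by (metis card_mono distinct_card less_Suc_eq_le)
  qed
  obtain p where Qp: "Q p" and mx: "\<forall>q. Q q \<longrightarrow> length q \<le> length p"
    using ex_has_greatest_nat[OF Qw bnd] by blast
  have pp: "pathE (E - D) p" and pC: "set p \<subseteq> C" using Qp unfolding Q_def by auto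
  have ppE: "pathE E p" using pathE_mono pp by blast
  have ne: "p \<noteq> []" and dp: "distinct p" using pp unfolding pathE_def by auto
  define n where "n = length p"
  define t where "t = last p"
  define h where "h = hd p"
  have tn: "t = p ! (n - 1)" unfolding t_def n_def using ne by (simp add: last_conv_nth)
  have hn: "h = p ! 0" unfolding h_def using ne by (simp add: hd_conv_nth)
  have n1: "n \<ge> 1" using ne unfolding n_def by (cases p) auto
  have tC: "t \<in> C" using pC ne unfolding t_def by auto
  have hC: "h \<in> C" using pC ne unfolding h_def by auto
  have Nt: "\<And>z. {t,z} \<in> E - D \<Longrightarrow> z \<in> set p"
  proof (rule ccontr)
    fix z assume e: "{t,z} \<in> E - D" and z: "z \<notin> set p"
    have "z \<in> C" using tC e reach_step[of "E - D" w t z] unfolding C_def by blast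
    then have "Q (p @ [z])" unfolding Q_def using pathE_snoc[OF pp z] e pC
      unfolding t_def by auto
    then show False using mx by fastforce
  qed
  have Nh: "\<And>z. {h,z} \<in> E - D \<Longrightarrow> z \<in> set p"
  proof (rule ccontr)
    fix z assume e: "{h,z} \<in> E - D" and z: "z \<notin> set p"
    have "{z,h} \<in> E - D" using e by (simp add: insert_commute)
    have "z \<in> C" using hC e reach_step[of "E - D" w h z] unfolding C_def by blast
    then have "Q (z # p)" unfolding Q_def using pathE_Cons[OF pp z] pC \<open>{z,h} \<in> E - D\<close>
      unfolding h_def by auto
    then show False using mx by fastforce
  qed
  have acyc: "\<nexists>c. is_cycle E c" using tr unfolding is_tree_def by blast
  have St: "{g \<in> E. t \<in> g} - D \<subseteq> (if n \<ge> 2 then {{t, p ! (n - 2)}} else {})"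
  proof
    fix g assume g: "g \<in> {g \<in> E. t \<in> g} - D"
    obtain z where gz: "g = {t,z}" "z \<noteq> t" using edge_other[OF wfE] g by blast
    have "z \<in> set p" using Nt g gz by blast
    then obtain i where i: "i < n" "p ! i = z" unfolding n_def by (meson in_set_conv_nth)
    have "i \<noteq> n - 1" using i gz tn by auto
    moreover have "\<not> Suc (Suc i) < n"
    proof
      assume "Suc (Suc i) < n"
      then have "is_cycle E (drop i p)" using cyc_drop[OF ppE] g gz i unfolding n_def t_def by auto
      then show False using acyc by blast
    qed
    ultimately have "i = n - 2" "n \<ge> 2" using i by auto
    then show "g \<in> (if n \<ge> 2 then {{t, p ! (n - 2)}} else {})" using gz i by auto
  qed
  have Sh: "{g \<in> E. h \<in> g} - D \<subseteq> {{h, p ! 1}}"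
  proof
    fix g assume g: "g \<in> {g \<in> E. h \<in> g} - D"
    obtain z where gz: "g = {h,z}" "z \<noteq> h" using edge_other[OF wfE] g by blast
    have "z \<in> set p" using Nh g gz by blast
    then obtain i where i: "i < n" "p ! i = z" unfolding n_def by (meson in_set_conv_nth)
    have "i \<noteq> 0" using i gz hn by (metis)
    moreover have "\<not> 2 \<le> i"
    proof
      assume "2 \<le> i"
      then have "is_cycle E (take (Suc i) p)" using cyc_take[OF ppE] g gz i unfolding n_def h_def
        by (auto simp: insert_commute)
      then show False using acyc by blast
    qed
    ultimately have "i = 1" by auto
    then show "g \<in> {{h, p ! 1}}" using gz i by auto
  qed
  have cnt: "\<And>x K. x \<in> C \<Longrightarrow> {g \<in> E. x \<in> g} - D \<subseteq> K \<Longrightarrow> card K \<le> 1 \<Longrightarrow> finite K \<Longrightarrow>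
      card {g \<in> D. x \<in> g} \<ge> 2"
  proof -
    fix x K assume x: "x \<in> C" and K: "{g \<in> E. x \<in> g} - D \<subseteq> K" "card K \<le> 1" "finite K"
    have "{g \<in> E. x \<in> g} \<subseteq> {g \<in> D. x \<in> g} \<union> K" using K by blast
    then have "card {g \<in> E. x \<in> g} \<le> card ({g \<in> D. x \<in> g} \<union> K)"
      using fD K by (intro card_mono) auto
    also have "\<dots> \<le> card {g \<in> D. x \<in> g} + card K" by (rule card_Un_le)
    finally show "card {g \<in> D. x \<in> g} \<ge> 2" using deg[OF x] K unfolding degree_def by linarith
  qed
  show False
  proof (cases "n \<ge> 2")
    case False
    then have "{g \<in> E. t \<in> g} - D \<subseteq> {}" using St by simp
    then have "{g \<in> E. t \<in> g} \<subseteq> D" by blast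
    then have "card {g \<in> E. t \<in> g} \<le> card D" using fD by (intro card_mono) auto
    then show False using deg[OF tC] D unfolding degree_def by linarith
  next
    case True
    have c1: "card {g \<in> D. t \<in> g} \<ge> 2" using cnt[OF tC, of "{{t, p ! (n - 2)}}"] St True by auto
    have c2: "card {g \<in> D. h \<in> g} \<ge> 2" using cnt[OF hC, of "{{h, p ! 1}}"] Sh by auto
    have e1: "{g \<in> D. t \<in> g} = D"
      using c1 D fD by (metis (no_types, lifting) card_seteq le_trans mem_Collect_eq subsetI)
    have e2: "{g \<in> D. h \<in> g} = D"
      using c2 D fD by (metis (no_types, lifting) card_seteq le_trans mem_Collect_eq subsetI)
    have htne: "h \<noteq> t" proof
      assume "h = t"
      then have "p ! 0 = p ! (n - 1)" using hn tn by simp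
      moreover have "0 < length p" "n - 1 < length p" using True unfolding n_def by auto
      ultimately have "0 = n - 1" using nth_eq_iff_index_eq[OF dp, of 0 "n - 1"] by simp
      then show False using True by simp
    qed
    have "D \<subseteq> {{h,t}}"
    proof
      fix g assume g: "g \<in> D"
      then have "h \<in> g" "t \<in> g" using e1 e2 by blast+
      moreover obtain x y where "g = {x,y}" using wf_edge[OF wfE] g D E_def by blast
      ultimately show "g \<in> {{h,t}}" using htne by auto
    qed
    then have "card D \<le> card {{h,t}}" by (intro card_mono) auto
    then have "card D \<le> 1" by simp
    then show False using c1 e1 by simp
  qed
qed


definition ray :: "'v set set \<Rightarrow> 'v \<Rightarrow> 'v \<Rightarrow> 'v list \<Rightarrow> bool" where
  "ray M u v r \<longleftrightarrow> pathE M r \<and> 2 \<le> length r \<and> r ! 0 = v \<and> r ! 1 = u \<and>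
     (\<forall>w\<in>set r. w \<noteq> hd r \<and> w \<noteq> last r \<longrightarrow> degree M w = 2) \<and> degree M (last r) \<noteq> 2"

lemma ray_interior:
  assumes "ray M u v r" "0 < k" "k < length r - 1"
  shows "degree M (r ! k) = 2"
proof -
  have d: "distinct r" and ne: "r \<noteq> []" using assms unfolding ray_def pathE_def by auto
  have "r ! k \<noteq> hd r" using nth_eq_iff_index_eq[OF d, of k 0] assms ne by (auto simp: hd_conv_nth)
  moreover have "r ! k \<noteq> last r" using nth_eq_iff_index_eq[OF d, of k "length r - 1"] assms ne
    by (auto simp: last_conv_nth)
  moreover have "r ! k \<in> set r" using assms by auto
  ultimately show ?thesis using assms unfolding ray_def by blast
qed

lemma three_nb:
  assumes "finite M" "degree M w = 2" "{w,a} \<in> M" "{w,b} \<in> M" "{w,c} \<in> M"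
    "a \<noteq> w" "b \<noteq> w" "c \<noteq> w" "a \<noteq> b" "a \<noteq> c"
  shows "b = c"
proof (rule ccontr)
  assume bc: "b \<noteq> c"
  have "card {{w,a},{w,b},{w,c}} = 3" using assms bc by (auto simp: doubleton_eq_iff)
  moreover have "{{w,a},{w,b},{w,c}} \<subseteq> {e \<in> M. w \<in> e}" using assms by auto
  moreover have "finite {e \<in> M. w \<in> e}" using assms(1) by simp
  ultimately have "3 \<le> card {e \<in> M. w \<in> e}" by (metis card_mono)
  then show False using assms(2) unfolding degree_def by simp
qed

lemma ray_edge: "ray M u v r \<Longrightarrow> Suc i < length r \<Longrightarrow> {r ! i, r ! Suc i} \<in> M"
  unfolding ray_def pathE_def by blast

lemma ray_dist: "ray M u v r \<Longrightarrow> i < length r \<Longrightarrow> j < length r \<Longrightarrow> i \<noteq> j \<Longrightarrow> r ! i \<noteq> r ! j"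
  unfolding ray_def pathE_def using nth_eq_iff_index_eq by blast

lemma walk:
  assumes fM: "finite M" and r1: "ray M u v r1" and r2: "ray M u v r2"
  shows "r1 = r2"
proof -
  have pref: "\<And>i. Suc i < length r1 \<Longrightarrow> Suc i < length r2 \<Longrightarrow> r1 ! i = r2 ! i \<and> r1 ! Suc i = r2 ! Suc i"
  proof -
    fix i show "Suc i < length r1 \<Longrightarrow> Suc i < length r2 \<Longrightarrow> r1 ! i = r2 ! i \<and> r1 ! Suc i = r2 ! Suc i"
    proof (induct i)
      case 0 then show ?case using r1 r2 unfolding ray_def by simp
    next
      case (Suc i)
      then have ih: "r1 ! i = r2 ! i" "r1 ! Suc i = r2 ! Suc i" by auto
      let ?w = "r1 ! Suc i"
      have dg: "degree M ?w = 2" using ray_interior[OF r1, of "Suc i"] Suc.prems by simp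
      have e1: "{?w, r1 ! i} \<in> M" using ray_edge[OF r1, of i] Suc.prems by (simp add: insert_commute)
      have e2: "{?w, r1 ! Suc (Suc i)} \<in> M" using ray_edge[OF r1, of "Suc i"] Suc.prems by simp
      have e3: "{?w, r2 ! Suc (Suc i)} \<in> M" using ray_edge[OF r2, of "Suc i"] Suc.prems ih by simp
      have "r1 ! i \<noteq> ?w" using ray_dist[OF r1, of i "Suc i"] Suc.prems by simp
      moreover have "r1 ! Suc (Suc i) \<noteq> ?w" using ray_dist[OF r1, of "Suc (Suc i)" "Suc i"] Suc.prems by simp
      moreover have "r2 ! Suc (Suc i) \<noteq> ?w" using ray_dist[OF r2, of "Suc (Suc i)" "Suc i"] Suc.prems ih by simp
      moreover have "r1 ! i \<noteq> r1 ! Suc (Suc i)" using ray_dist[OF r1, of i "Suc (Suc i)"] Suc.prems by simp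
      moreover have "r1 ! i \<noteq> r2 ! Suc (Suc i)" using ray_dist[OF r2, of i "Suc (Suc i)"] Suc.prems ih by simp
      ultimately have "r1 ! Suc (Suc i) = r2 ! Suc (Suc i)" using three_nb[OF fM dg e1 e2 e3] by blast
      then show ?case using ih by simp
    qed
  qed
  have l1: "2 \<le> length r1" and l2: "2 \<le> length r2" using r1 r2 unfolding ray_def by auto
  have nlt: "\<not> length ra < length rb" if ra: "ray M u v ra" and rb: "ray M u v rb"
    and pr: "\<And>i. Suc i < length ra \<Longrightarrow> Suc i < length rb \<Longrightarrow> ra ! Suc i = rb ! Suc i" for ra rb
  proof
    assume lt: "length ra < length rb"
    have la: "2 \<le> length ra" using ra unfolding ray_def by auto
    have sx: "Suc (length ra - 2) = length ra - 1" using la by simp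
    have "ra ! (length ra - 1) = rb ! (length ra - 1)" using pr[of "length ra - 2"] la lt unfolding sx
      by simp
    moreover have "degree M (rb ! (length ra - 1)) = 2" using ray_interior[OF rb, of "length ra - 1"] la lt by simp
    moreover have "last ra = ra ! (length ra - 1)" using la by (intro last_conv_nth) auto
    ultimately show False using ra unfolding ray_def by simp
  qed
  have "length r1 = length r2"
    using nlt[OF r1 r2] nlt[OF r2 r1] pref by (metis linorder_neqE_nat)
  then show ?thesis
  proof (intro nth_equalityI)
    fix i assume "length r1 = length r2" "i < length r1"
    then show "r1 ! i = r2 ! i" using pref[of "i - 1"] pref[of 0] l1
      by (cases i) (auto simp: Suc_le_eq)
  qed
qed


lemma in_take_nth: "w \<in> set (take m p) \<Longrightarrow> \<exists>k<m. k < length p \<and> w = p ! k"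
  by (auto simp: in_set_conv_nth)

lemma in_drop_nth: "w \<in> set (drop j p) \<Longrightarrow> \<exists>k. j \<le> k \<and> k < length p \<and> w = p ! k"
  by (auto simp: in_set_conv_nth) (metis le_add2 add.commute less_diff_conv)

lemma rays_of_path:
  assumes pp: "pathE M p" and int: "\<forall>w\<in>set p. w \<noteq> hd p \<and> w \<noteq> last p \<longrightarrow> degree M w = 2"
    and dh: "degree M (hd p) \<noteq> 2" and dl: "degree M (last p) \<noteq> 2" and j: "Suc j < length p"
  shows "ray M (p ! j) (p ! Suc j) (rev (take (Suc (Suc j)) p)) \<and> last (rev (take (Suc (Suc j)) p)) = hd p"
    and "ray M (p ! Suc j) (p ! j) (drop j p) \<and> last (drop j p) = last p"
proof -
  have d: "distinct p" and ne: "p \<noteq> []" using pp unfolding pathE_def by auto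
  let ?n = "length p"
  have hp: "hd p = p ! 0" using ne by (simp add: hd_conv_nth)
  have lp: "last p = p ! (?n - 1)" using ne by (simp add: last_conv_nth)
  let ?r = "rev (take (Suc (Suc j)) p)"
  have lr: "last ?r = hd p" by (simp add: last_rev hd_take)
  have "take (Suc (Suc j)) p = take j p @ [p ! j, p ! Suc j]" using j
    by (simp add: take_Suc_conv_app_nth)
  then have tk: "?r = p ! Suc j # p ! j # rev (take j p)" by simp
  have hr: "hd ?r = p ! Suc j" by (simp add: tk)
  have r0: "?r ! 0 = p ! Suc j" by (simp add: tk)
  have r1: "?r ! 1 = p ! j" by (simp add: tk)
  have "ray M (p ! j) (p ! Suc j) ?r"
    unfolding ray_def
  proof (intro conjI ballI impI)
    show "pathE M ?r" using pathE_rev pathE_take pp by blast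
    show "2 \<le> length ?r" using j by simp
    show "?r ! 0 = p ! Suc j" by (rule r0)
    show "?r ! 1 = p ! j" by (rule r1)
    show "degree M (last ?r) \<noteq> 2" using lr dh by simp
  next
    fix w assume w: "w \<in> set ?r" and wn: "w \<noteq> hd ?r \<and> w \<noteq> last ?r"
    then obtain k where k: "k < Suc (Suc j)" "k < ?n" "w = p ! k" using in_take_nth[of w] by auto
    have "w \<noteq> last p"
    proof
      assume "w = last p"
      then have "k = ?n - 1" using nth_eq_iff_index_eq[OF d, of k "?n - 1"] k lp ne by auto
      then have "k = Suc j" using k j by simp
      then show False using wn hr k by simp
    qed
    moreover have "w \<in> set p" using w by (auto dest: in_set_takeD)
    ultimately show "degree M w = 2" using int wn lr by auto
  qed
  then show "ray M (p ! j) (p ! Suc j) ?r \<and> last ?r = hd p" using lr by simp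
  let ?s = "drop j p"
  have ls: "last ?s = last p" using j by simp
  have hs: "hd ?s = p ! j" using j by (simp add: hd_drop_conv_nth)
  have "ray M (p ! Suc j) (p ! j) ?s"
    unfolding ray_def
  proof (intro conjI ballI impI)
    show "pathE M ?s" using pathE_drop[OF pp, of j] j by simp
    show "2 \<le> length ?s" using j by simp
    show "?s ! 0 = p ! j" using j by simp
    show "?s ! 1 = p ! Suc j" using j by simp
    show "degree M (last ?s) \<noteq> 2" using ls dl by simp
  next
    fix w assume w: "w \<in> set ?s" and wn: "w \<noteq> hd ?s \<and> w \<noteq> last ?s"
    then obtain k where k: "j \<le> k" "k < ?n" "w = p ! k" using in_drop_nth[of w] by auto
    have "w \<noteq> hd p"
    proof
      assume "w = hd p"
      then have "k = 0" using nth_eq_iff_index_eq[OF d, of k 0] k hp ne by auto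
      then have "j = 0" using k by simp
      then show False using wn hs k \<open>k = 0\<close> by simp
    qed
    moreover have "w \<in> set p" using w by (meson in_set_dropD)
    ultimately show "degree M w = 2" using int wn ls by auto
  qed
  then show "ray M (p ! Suc j) (p ! j) ?s \<and> last ?s = last p" using ls by simp
qed


lemma minE_sub: "min_sub_E S X \<subseteq> snd S"
  unfolding min_sub_E_def is_path_def by blast

lemma RV_deg: "x \<in> restrict_V S X \<Longrightarrow> degree (min_sub_E S X) x \<noteq> 2"
  unfolding restrict_V_def by blast

lemma L_in_RV:
  assumes "finite (snd S)" "X \<subseteq> leaves S"
  shows "X \<subseteq> restrict_V S X"
proof
  fix x assume x: "x \<in> X"
  have "is_path (snd S) [x] x x" unfolding is_path_def by simp
  then have "x \<in> min_sub_V S X" unfolding min_sub_V_def using x by force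
  moreover have "degree (min_sub_E S X) x \<le> degree (snd S) x"
    unfolding degree_def using minE_sub[of S X] assms(1) by (intro card_mono) auto
  moreover have "degree (snd S) x \<le> 1" using x assms(2) unfolding leaves_def by auto
  ultimately show "x \<in> restrict_V S X" unfolding restrict_V_def by auto
qed

lemma RE_wf: "wf_graph (restrict_V S X) (restrict_E S X)"
  unfolding wf_graph_def restrict_E_def by blast

lemma bad_rays:
  assumes fS: "finite (snd S)" and e: "e = {u,v}" and g: "g \<in> restrict_E S X" "g = {c,d}"
    and bad: "\<not> reach (snd S - {e}) c d"
  shows "\<exists>ru rv. ray (min_sub_E S X) u v ru \<and> ray (min_sub_E S X) v u rv \<and> g = {last ru, last rv}"
proof -
  let ?M = "min_sub_E S X"
  obtain a b p where ab: "g = {a,b}" "a \<in> restrict_V S X" "b \<in> restrict_V S X"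
    and p: "is_path ?M p a b" and int: "\<forall>w\<in>set p. w \<noteq> a \<and> w \<noteq> b \<longrightarrow> degree ?M w = 2"
    using g(1) unfolding restrict_E_def by blast
  have pp: "pathE ?M p" "hd p = a" "last p = b" using p by (auto simp: is_path_iff)
  have bad2: "\<not> reach (snd S - {e}) a b"
  proof
    assume r: "reach (snd S - {e}) a b"
    have "{a,b} = {c,d}" using ab g by simp
    then show False using bad r reach_sym by (metis doubleton_eq_iff)
  qed
  have "\<exists>j. Suc j < length p \<and> {p ! j, p ! Suc j} = e"
  proof (rule ccontr)
    assume "\<not> ?thesis"
    then have "pathE (snd S - {e}) p" using pp(1) minE_sub unfolding pathE_def by blast
    then show False using pathE_reach bad2 pp by metis
  qed
  then obtain j where j: "Suc j < length p" "{p ! j, p ! Suc j} = {u,v}" using e by blast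
  have R: "ray ?M (p ! j) (p ! Suc j) (rev (take (Suc (Suc j)) p)) \<and> last (rev (take (Suc (Suc j)) p)) = a"
       "ray ?M (p ! Suc j) (p ! j) (drop j p) \<and> last (drop j p) = b"
  proof -
    have i2: "\<forall>w\<in>set p. w \<noteq> hd p \<and> w \<noteq> last p \<longrightarrow> degree ?M w = 2" using int pp by simp
    have "degree ?M (hd p) \<noteq> 2" "degree ?M (last p) \<noteq> 2" using RV_deg[of a S X] RV_deg[of b S X] ab pp by auto
    then show "ray ?M (p ! j) (p ! Suc j) (rev (take (Suc (Suc j)) p)) \<and> last (rev (take (Suc (Suc j)) p)) = a"
       "ray ?M (p ! Suc j) (p ! j) (drop j p) \<and> last (drop j p) = b"
      using rays_of_path[OF pp(1) i2 _ _ j(1)] pp by auto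
  qed
  show ?thesis
  proof (cases "p ! j = u")
    case True
    then have "p ! Suc j = v" using j(2) by (auto simp: doubleton_eq_iff)
    then show ?thesis using R True ab by blast
  next
    case False
    then have "p ! j = v" "p ! Suc j = u" using j(2) by (auto simp: doubleton_eq_iff)
    then show ?thesis using R ab by (metis insert_commute)
  qed
qed

lemma bad_unique:
  assumes fS: "finite (snd S)" and e: "e = {u,v}"
    and g1: "g1 \<in> restrict_E S X" "g1 = {c1,d1}" "\<not> reach (snd S - {e}) c1 d1"
    and g2: "g2 \<in> restrict_E S X" "g2 = {c2,d2}" "\<not> reach (snd S - {e}) c2 d2"
  shows "g1 = g2"
proof -
  have fM: "finite (min_sub_E S X)" using fS minE_sub finite_subset by metis
  obtain ru1 rv1 where r1: "ray (min_sub_E S X) u v ru1" "ray (min_sub_E S X) v u rv1" "g1 = {last ru1, last rv1}"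
    using bad_rays[OF fS e g1] by blast
  obtain ru2 rv2 where r2: "ray (min_sub_E S X) u v ru2" "ray (min_sub_E S X) v u rv2" "g2 = {last ru2, last rv2}"
    using bad_rays[OF fS e g2] by blast
  show ?thesis using walk[OF fM r1(1) r2(1)] walk[OF fM r1(2) r2(2)] r1 r2 by simp
qed


lemma transport:
  assumes bij: "bij_betw \<phi> V W" and wV: "wf_graph V EV" and wW: "wf_graph W EW"
    and iff: "\<forall>a\<in>V. \<forall>b\<in>V. {a,b} \<in> EV \<longleftrightarrow> {\<phi> a, \<phi> b} \<in> EW" and a: "a \<in> V" "b \<in> V"
  shows "reach EV a b \<longleftrightarrow> reach EW (\<phi> a) (\<phi> b)"
proof
  assume "reach EV a b"
  then show "reach EW (\<phi> a) (\<phi> b)"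
  proof (induct rule: reach_induct)
    case base then show ?case by simp
  next
    case (step y z)
    then have "y \<in> V" "z \<in> V" using wf_edge2[OF wV] by auto
    then have "{\<phi> y, \<phi> z} \<in> EW" using iff step by blast
    then show ?case using step reach_step by metis
  qed
next
  assume r: "reach EW (\<phi> a) (\<phi> b)"
  have "\<exists>z\<in>V. \<phi> b = \<phi> z \<and> reach EV a z"
    using r
  proof (induct rule: reach_induct)
    case base then show ?case using a by (intro bexI[of _ a]) auto
  next
    case (step y' z')
    then obtain y where y: "y \<in> V" "y' = \<phi> y" "reach EV a y" by blast
    have "z' \<in> W" using wf_edge2[OF wW step(2)] by blast
    then obtain z where z: "z \<in> V" "z' = \<phi> z" using bij unfolding bij_betw_def by blast
    then have "{y,z} \<in> EV" using iff y step by blast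
    then show ?case using y z reach_step by metis
  qed
  then obtain z where "z \<in> V" "\<phi> b = \<phi> z" "reach EV a z" by blast
  then show "reach EV a b" using bij a unfolding bij_betw_def inj_on_def by metis
qed

lemma good_reach:
  assumes "\<forall>g\<in>E'. \<forall>c d. g = {c,d} \<longrightarrow> reach SE c d" "reach E' s t"
  shows "reach SE s t"
  using assms(2)
proof (induct rule: reach_induct)
  case base then show ?case by simp
next
  case (step y z) then show ?case using assms(1) reach_trans by metis
qed

lemma split_exists:
  assumes phS: "phylo_tree S" and e: "e = {u,v}"
    and phT: "phylo_tree T" and ag: "agrees S T"
    and x0: "x0 \<in> leaves T" "x0 \<in> side_labels S e u"
    and y0: "y0 \<in> leaves T" "y0 \<in> side_labels S e v"
    and disj: "side_labels S e u \<inter> side_labels S e v = {}"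
    and cov: "leaves S \<subseteq> side_labels S e u \<union> side_labels S e v"
  shows "\<exists>a b. {a,b} \<in> snd T \<and> side_labels T {a,b} a = leaves T \<inter> side_labels S e u
              \<and> side_labels T {a,b} b = leaves T \<inter> side_labels S e v"
proof -
  define L where "L = leaves T"
  define RV where "RV = restrict_V S L"
  define RE where "RE = restrict_E S L"
  define Lu where "Lu = side_labels S e u"
  define Lv where "Lv = side_labels S e v"
  define SE where "SE = snd S - {e}"
  have LS: "L \<subseteq> leaves S" using ag unfolding agrees_def L_def by blast
  obtain \<phi> where bij: "bij_betw \<phi> RV (fst T)" and phifix: "\<forall>x\<in>L. \<phi> x = x"
    and iff: "\<forall>a\<in>RV. \<forall>b\<in>RV. {a, b} \<in> RE \<longleftrightarrow> {\<phi> a, \<phi> b} \<in> snd T"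
    using ag unfolding agrees_def L_def RV_def RE_def by blast
  have trS: "is_tree (fst S) (snd S)" and trT: "is_tree (fst T) (snd T)"
    using phS phT unfolding phylo_tree_def by auto
  have fS: "finite (snd S)" using trS wf_finite unfolding is_tree_def by blast
  have LRV: "L \<subseteq> RV" using L_in_RV[OF fS LS] unfolding RV_def .
  have wT: "wf_graph (fst T) (snd T)" using trT unfolding is_tree_def by blast
  have wR: "wf_graph RV RE" unfolding RV_def RE_def by (rule RE_wf)
  have LT: "L \<subseteq> fst T" unfolding L_def leaves_def by blast
  have cT: "\<forall>x\<in>fst T. \<forall>y\<in>fst T. reach (snd T) x y" using trT unfolding is_tree_def connected_graph_def by blast
  have phiV: "\<And>x. x \<in> RV \<Longrightarrow> \<phi> x \<in> fst T" using bij unfolding bij_betw_def by blast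
  have reachR: "\<And>x y. x \<in> RV \<Longrightarrow> y \<in> RV \<Longrightarrow> reach RE x y"
  proof -
    fix x y assume xy: "x \<in> RV" "y \<in> RV"
    have "reach (snd T) (\<phi> x) (\<phi> y)" using cT phiV xy by blast
    then show "reach RE x y" using transport[OF bij wR wT iff xy] by simp
  qed
  have inLu: "\<And>x. x \<in> Lu \<longleftrightarrow> x \<in> leaves S \<and> reach SE u x" unfolding Lu_def side_labels_def SE_def by blast
  have inLv: "\<And>x. x \<in> Lv \<longleftrightarrow> x \<in> leaves S \<and> reach SE v x" unfolding Lv_def side_labels_def SE_def by blast
  have "\<exists>f' c d. f' \<in> RE \<and> f' = {c,d} \<and> \<not> reach SE c d"
  proof (rule ccontr)
    assume "\<not> ?thesis"
    then have "\<forall>g\<in>RE. \<forall>c d. g = {c,d} \<longrightarrow> reach SE c d" by blast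
    moreover have "x0 \<in> RV" "y0 \<in> RV" using LRV x0(1) y0(1) unfolding L_def by auto
    then have "reach RE x0 y0" by (rule reachR)
    ultimately have "reach SE x0 y0" by (rule good_reach)
    moreover have "reach SE u x0" using x0(2) inLu unfolding Lu_def by simp
    ultimately have "reach SE u y0" using reach_trans by metis
    moreover have "y0 \<in> leaves S" using y0 LS unfolding L_def by blast
    ultimately have "y0 \<in> Lu" using inLu by simp
    then show False using y0 disj unfolding Lu_def by blast
  qed
  then obtain f' c d where f': "f' \<in> RE" "f' = {c,d}" "\<not> reach SE c d" by blast
  have cd: "c \<in> RV" "d \<in> RV" using wf_edge2[OF wR, of c d] f' by simp_all
  define Q where "Q = RE - {f'}"
  have goodQ: "\<forall>g\<in>Q. \<forall>c' d'. g = {c',d'} \<longrightarrow> reach SE c' d'"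
  proof (intro ballI allI impI, rule ccontr)
    fix g c' d' assume g: "g \<in> Q" "g = {c',d'}" "\<not> reach SE c' d'"
    have gR: "g \<in> restrict_E S L" using g unfolding Q_def RE_def by blast
    have "g = f'" using bad_unique[OF fS e gR g(2) _ _ f'(2)] g(3) f'(3) f'(1) unfolding RE_def SE_def by blast
    then show False using g unfolding Q_def by blast
  qed
  have QSE: "\<And>s t. reach Q s t \<Longrightarrow> reach SE s t" using good_reach[OF goodQ] by blast
  have wQ: "wf_graph RV Q" using wf_mono[OF wR] unfolding Q_def by blast
  have inj: "inj_on \<phi> RV" using bij unfolding bij_betw_def by blast
  have covQ: "\<And>x. x \<in> L \<Longrightarrow> reach Q x c \<or> reach Q x d"
  proof -
    fix x assume "x \<in> L"
    then have "reach RE x c" using reachR LRV cd by blast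
    moreover have "RE \<subseteq> Q \<union> {{c,d}}" unfolding Q_def using f' by blast
    ultimately show "reach Q x c \<or> reach Q x d" using split2 by metis
  qed
  have sameLu: "\<And>x x'. x \<in> L \<Longrightarrow> x' \<in> L \<Longrightarrow> reach Q x x' \<Longrightarrow> x \<in> Lu \<Longrightarrow> x' \<in> Lu"
  proof -
    fix x x' assume h: "x \<in> L" "x' \<in> L" "reach Q x x'" "x \<in> Lu"
    have "reach SE u x" using h(4) inLu by blast
    then have "reach SE u x'" using QSE[OF h(3)] reach_trans by metis
    then show "x' \<in> Lu" using inLu h(2) LS by blast
  qed
  have sameLv: "\<And>x x'. x \<in> L \<Longrightarrow> x' \<in> L \<Longrightarrow> reach Q x x' \<Longrightarrow> x \<in> Lv \<Longrightarrow> x' \<in> Lv"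
  proof -
    fix x x' assume h: "x \<in> L" "x' \<in> L" "reach Q x x'" "x \<in> Lv"
    have "reach SE v x" using h(4) inLv by blast
    then have "reach SE v x'" using QSE[OF h(3)] reach_trans by metis
    then show "x' \<in> Lv" using inLv h(2) LS by blast
  qed
  have key: "\<And>c1 d1. {c1,d1} = {c,d} \<Longrightarrow> reach Q x0 c1 \<Longrightarrow> (\<exists>a b. {a,b} \<in> snd T \<and> side_labels T {a,b} a = leaves T \<inter> side_labels S e u
              \<and> side_labels T {a,b} b = leaves T \<inter> side_labels S e v)"
  proof -
    fix c1 d1 assume cd1: "{c1,d1} = {c,d}" and xc: "reach Q x0 c1"
    have c1d1: "c1 \<in> RV" "d1 \<in> RV" using cd cd1 by (auto simp: doubleton_eq_iff)
    define f where "f = {\<phi> c1, \<phi> d1}"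
    have "{c1,d1} \<in> RE" using f' cd1 by simp
    then have ff: "f \<in> snd T" using iff c1d1 unfolding f_def by blast
    have iffQ: "\<forall>a\<in>RV. \<forall>b\<in>RV. {a, b} \<in> Q \<longleftrightarrow> {\<phi> a, \<phi> b} \<in> snd T - {f}"
    proof (intro ballI)
      fix a b assume ab: "a \<in> RV" "b \<in> RV"
      have "\<phi> ` {a,b} = \<phi> ` {c1,d1} \<longleftrightarrow> {a,b} = {c1,d1}"
        using inj ab c1d1 by (intro inj_on_image_eq_iff) auto
      moreover have e1: "{\<phi> c1, \<phi> d1} = {\<phi> c, \<phi> d}"
        by (metis cd1 image_insert image_empty)
      ultimately have "{\<phi> a, \<phi> b} = f \<longleftrightarrow> {a,b} = f'" unfolding f_def e1 using cd1 f' by simp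
      then show "{a, b} \<in> Q \<longleftrightarrow> {\<phi> a, \<phi> b} \<in> snd T - {f}" using iff ab unfolding Q_def by blast
    qed
    have wT': "wf_graph (fst T) (snd T - {f})" using wf_mono[OF wT] by blast
    have sideT: "side_labels T f (\<phi> z) = {y \<in> L. reach Q z y}" if "z \<in> RV" for z
    proof -
      have "\<And>y. y \<in> L \<Longrightarrow> reach Q z y \<longleftrightarrow> reach (snd T - {f}) (\<phi> z) y"
      proof -
        fix y assume y: "y \<in> L"
        then have yR: "y \<in> RV" using LRV by blast
        have "\<phi> y = y" using phifix y by blast
        then show "reach Q z y \<longleftrightarrow> reach (snd T - {f}) (\<phi> z) y"
          using transport[OF bij wQ wT' iffQ that yR] by simp
      qed
      then show ?thesis unfolding side_labels_def L_def by blast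
    qed
    have cov1: "\<And>x. x \<in> L \<Longrightarrow> reach Q x c1 \<or> reach Q x d1"
    proof -
      fix x assume x: "x \<in> L"
      from cd1 have "c1 = c \<and> d1 = d \<or> c1 = d \<and> d1 = c" by (simp add: doubleton_eq_iff)
      then show "reach Q x c1 \<or> reach Q x d1" using covQ[OF x] by blast
    qed
    have y0d: "reach Q y0 d1"
    proof (rule ccontr)
      assume "\<not> reach Q y0 d1"
      then have "reach Q y0 c1" using cov1[of y0] y0 unfolding L_def by blast
      then have "reach Q x0 y0" using xc reach_sym reach_trans by metis
      moreover have "x0 \<in> L" "x0 \<in> Lu" "y0 \<in> L" using x0 y0 unfolding L_def Lu_def by auto
      ultimately have "y0 \<in> Lu" using sameLu[of x0 y0] by blast
      then show False using y0 disj unfolding Lu_def Lv_def by blast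
    qed
    have A1: "{y \<in> L. reach Q c1 y} = L \<inter> Lu"
    proof (intro equalityI subsetI)
      fix y assume "y \<in> {y \<in> L. reach Q c1 y}"
      then have yy: "y \<in> L" "reach Q x0 y" using xc reach_trans[of Q x0 c1 y] by auto
      have "x0 \<in> L" "x0 \<in> Lu" using x0 unfolding L_def Lu_def by auto
      then show "y \<in> L \<inter> Lu" using sameLu[of x0 y] yy by blast
    next
      fix y assume y: "y \<in> L \<inter> Lu"
      show "y \<in> {y \<in> L. reach Q c1 y}"
      proof (rule ccontr)
        assume "y \<notin> {y \<in> L. reach Q c1 y}"
        then have "\<not> reach Q c1 y" using y by simp
        then have "\<not> reach Q y c1" using reach_sym[of Q y c1] by blast
        then have "reach Q y d1" using cov1[of y] y by blast
        then have "reach Q y0 y" using y0d reach_sym reach_trans by metis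
        moreover have "y0 \<in> L" "y0 \<in> Lv" using y0 unfolding L_def Lv_def by auto
        ultimately have "y \<in> Lv" using sameLv[of y0 y] y by blast
        then show False using y disj unfolding Lu_def Lv_def by blast
      qed
    qed
    have A2: "{y \<in> L. reach Q d1 y} = L \<inter> Lv"
    proof (intro equalityI subsetI)
      fix y assume "y \<in> {y \<in> L. reach Q d1 y}"
      then have yy: "y \<in> L" "reach Q y0 y" using y0d reach_trans[of Q y0 d1 y] by auto
      have "y0 \<in> L" "y0 \<in> Lv" using y0 unfolding L_def Lv_def by auto
      then show "y \<in> L \<inter> Lv" using sameLv[of y0 y] yy by blast
    next
      fix y assume y: "y \<in> L \<inter> Lv"
      show "y \<in> {y \<in> L. reach Q d1 y}"
      proof (rule ccontr)
        assume "y \<notin> {y \<in> L. reach Q d1 y}"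
        then have "\<not> reach Q d1 y" using y by simp
        then have "\<not> reach Q y d1" using reach_sym[of Q y d1] by blast
        then have "reach Q y c1" using cov1[of y] y by blast
        then have "reach Q x0 y" using xc reach_sym reach_trans by metis
        moreover have "x0 \<in> L" "x0 \<in> Lu" using x0 unfolding L_def Lu_def by auto
        ultimately have "y \<in> Lu" using sameLu[of x0 y] y by blast
        then show False using y disj unfolding Lu_def Lv_def by blast
      qed
    qed
    have "{\<phi> c1, \<phi> d1} \<in> snd T \<and> side_labels T {\<phi> c1, \<phi> d1} (\<phi> c1) = L \<inter> Lu
              \<and> side_labels T {\<phi> c1, \<phi> d1} (\<phi> d1) = L \<inter> Lv"
      using ff sideT[OF c1d1(1)] sideT[OF c1d1(2)] A1 A2 unfolding f_def by simp
    then show "(\<exists>a b. {a,b} \<in> snd T \<and> side_labels T {a,b} a = leaves T \<inter> side_labels S e u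
              \<and> side_labels T {a,b} b = leaves T \<inter> side_labels S e v)" unfolding L_def Lu_def Lv_def by blast
  qed
  show ?thesis using covQ[of x0] x0 key[of c d] key[of d c] unfolding L_def by (auto simp: insert_commute)
qed


lemma side_in: "reach (snd T - {f}) s l \<Longrightarrow> l \<in> leaves T \<Longrightarrow> l \<in> side_labels T f s"
  unfolding side_labels_def by blast

lemma side_reach: "l \<in> side_labels T f s \<Longrightarrow> reach (snd T - {f}) s l \<and> l \<in> leaves T"
  unfolding side_labels_def by blast

lemma split_unique:
  assumes ph: "phylo_tree T" and f1: "{a1,b1} \<in> snd T" and f2: "{a2,b2} \<in> snd T"
    and s1: "side_labels T {a1,b1} a1 = X" "side_labels T {a1,b1} b1 = Y"
    and s2: "side_labels T {a2,b2} a2 = X" "side_labels T {a2,b2} b2 = Y"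
    and XY: "X \<inter> Y = {}"
  shows "{a1,b1} = {a2,b2}"
proof (rule ccontr)
  assume ne: "{a1,b1} \<noteq> {a2,b2}"
  define D where "D = {{a1,b1},{a2,b2}}"
  define E0 where "E0 = snd T - D"
  have tr: "is_tree (fst T) (snd T)" using ph unfolding phylo_tree_def by blast
  have wT: "wf_graph (fst T) (snd T)" using tr unfolding is_tree_def by blast
  have D: "D \<subseteq> snd T" "card D \<le> 2" unfolding D_def using f1 f2 by (auto simp: card_insert_if)
  have E01: "E0 \<subseteq> snd T - {{a1,b1}}" and E02: "E0 \<subseteq> snd T - {{a2,b2}}" unfolding E0_def D_def by auto
  have f2E1: "{a2,b2} \<in> snd T - {{a1,b1}}" using f2 ne by auto
  have f1E2: "{a1,b1} \<in> snd T - {{a2,b2}}" using f1 ne by auto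
  have vs: "a1 \<in> fst T" "b1 \<in> fst T" "a2 \<in> fst T" "b2 \<in> fst T"
    using wf_edge2[OF wT f1] wf_edge2[OF wT f2] by auto
  have leaf: "\<And>w. w \<in> fst T \<Longrightarrow> \<exists>l\<in>leaves T. reach E0 w l"
    using leaf_reach[OF ph D] unfolding E0_def by blast
  have "reach (snd T) a2 a1" using tr vs unfolding is_tree_def connected_graph_def by blast
  then have "reach (snd T - {{a1,b1}}) a2 a1 \<or> reach (snd T - {{a1,b1}}) a2 b1"
    using split2[of "snd T" a2 a1 "snd T - {{a1,b1}}" a1 b1] by blast
  then obtain w1 where w1: "w1 = a1 \<or> w1 = b1" "reach (snd T - {{a1,b1}}) w1 a2"
    using reach_sym[of "snd T - {{a1,b1}}" a2 a1] reach_sym[of "snd T - {{a1,b1}}" a2 b1] by blast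
  then have "reach E0 w1 a2 \<or> reach E0 w1 b2"
    using split2[of "snd T - {{a1,b1}}" w1 a2 E0 a2 b2] unfolding E0_def D_def by blast
  then obtain w2 where w2: "w2 = a2 \<or> w2 = b2" "reach E0 w1 w2" by blast
  have m1: "\<And>s t. reach E0 s t \<Longrightarrow> reach (snd T - {{a1,b1}}) s t" using reach_mono E01 by metis
  have m2: "\<And>s t. reach E0 s t \<Longrightarrow> reach (snd T - {{a2,b2}}) s t" using reach_mono E02 by metis
  have e1: "reach (snd T - {{a1,b1}}) a2 b2" "reach (snd T - {{a1,b1}}) b2 a2"
    using reach_edge[OF f2E1] reach_sym by metis+
  have e2: "reach (snd T - {{a2,b2}}) a1 b1" "reach (snd T - {{a2,b2}}) b1 a1"
    using reach_edge[OF f1E2] reach_sym by metis+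
  show False
  proof (cases "w1 = a1")
    case w1a: True
    show False
    proof (cases "w2 = a2")
      case True
      obtain l where l: "l \<in> leaves T" "reach E0 b2 l" using leaf vs by blast
      have "l \<in> Y" using side_in[OF m2[OF l(2)] l(1)] s2 by simp
      moreover have "reach (snd T - {{a1,b1}}) a1 l"
        using m1[OF w2(2)] e1(1) m1[OF l(2)] w1a True reach_trans by metis
      then have "l \<in> X" using side_in[OF _ l(1)] s1 by blast
      ultimately show False using XY by blast
    next
      case False
      then have w2b: "w2 = b2" using w2 by blast
      obtain l where l: "l \<in> leaves T" "reach E0 a1 l" using leaf vs by blast
      have "l \<in> X" using side_in[OF m1[OF l(2)] l(1)] s1 by simp
      moreover have "reach (snd T - {{a2,b2}}) b2 l"
        using reach_sym[OF m2[OF w2(2)]] m2[OF l(2)] w1a w2b reach_trans by metis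
      then have "l \<in> Y" using side_in[OF _ l(1)] s2 by blast
      ultimately show False using XY by blast
    qed
  next
    case w1b': False
    then have w1b: "w1 = b1" using w1 by blast
    show False
    proof (cases "w2 = a2")
      case True
      obtain l where l: "l \<in> leaves T" "reach E0 b1 l" using leaf vs by blast
      have "l \<in> Y" using side_in[OF m1[OF l(2)] l(1)] s1 by simp
      moreover have "reach (snd T - {{a2,b2}}) a2 l"
        using reach_sym[OF m2[OF w2(2)]] m2[OF l(2)] w1b True reach_trans by metis
      then have "l \<in> X" using side_in[OF _ l(1)] s2 by blast
      ultimately show False using XY by blast
    next
      case False
      then have w2b: "w2 = b2" using w2 by blast
      obtain l where l: "l \<in> leaves T" "reach E0 a2 l" using leaf vs by blast
      have "l \<in> X" using side_in[OF m2[OF l(2)] l(1)] s2 by simp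
      moreover have "reach (snd T - {{a1,b1}}) b1 l"
        using m1[OF w2(2)] e1(2) m1[OF l(2)] w1b w2b reach_trans by metis
      then have "l \<in> Y" using side_in[OF _ l(1)] s1 by blast
      ultimately show False using XY by blast
    qed
  qed
qed


lemma reach_A:
  assumes closed: "\<forall>w w'. {w,w'} \<in> E' \<longrightarrow> w \<in> A \<longrightarrow> w' \<in> A" and r: "reach E' s t"
  shows "s \<in> A \<longleftrightarrow> t \<in> A"
proof -
  have fw: "\<And>s t. reach E' s t \<Longrightarrow> s \<in> A \<Longrightarrow> t \<in> A"
  proof -
    fix s t assume "reach E' s t" "s \<in> A"
    then show "t \<in> A" by (induct rule: reach_induct) (use closed in blast)+
  qed
  show ?thesis using fw[OF r] fw[OF reach_sym[OF r]] by blast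
qed

lemma graph_cut:
  assumes conn: "connected_graph V E" and wfE: "wf_graph V E" and FE: "F \<subseteq> E"
    and xA: "x \<in> A" "x \<in> V" and yA: "y \<notin> A" "y \<in> V"
    and closed: "\<forall>w w'. {w,w'} \<in> E - F \<longrightarrow> w \<in> A \<longrightarrow> w' \<in> A"
    and cross: "\<forall>f\<in>F. \<exists>a b. f = {a,b} \<and> a \<in> A \<and> b \<notin> A"
  shows "is_cut V E F \<and> (is_min_cut V E F \<longleftrightarrow> card (components V (E - F)) = 2)"
proof -
  let ?E = "E - F"
  have rA: "\<And>s t. reach ?E s t \<Longrightarrow> s \<in> A \<longleftrightarrow> t \<in> A" using reach_A[OF closed] by blast
  have nxy: "\<not> reach ?E x y" using rA xA yA by blast
  have cut: "is_cut V E F" unfolding is_cut_def connected_graph_def using FE nxy xA yA by blast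
  define cp where "cp s = {z \<in> V. reach ?E s z}" for s
  have cpc: "\<And>s. s \<in> V \<Longrightarrow> cp s \<in> components V ?E" unfolding cp_def components_def by blast
  have comps: "components V ?E = cp ` V" unfolding cp_def components_def by blast
  have cp_eq: "\<And>s t. reach ?E s t \<Longrightarrow> cp s = cp t"
  proof -
    fix s t assume st: "reach ?E s t"
    have "\<And>z. reach ?E s z \<longleftrightarrow> reach ?E t z"
      using reach_trans[OF st] reach_trans[OF reach_sym[OF st]] by blast
    then show "cp s = cp t" unfolding cp_def by blast
  qed
  have cxy: "cp x \<noteq> cp y"
  proof
    assume "cp x = cp y"
    then have "y \<in> cp x" unfolding cp_def using yA by auto
    then show False using nxy unfolding cp_def by blast
  qed
  have "is_min_cut V E F \<longleftrightarrow> card (components V ?E) = 2"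
  proof
    assume mc: "is_min_cut V E F"
    have "F \<noteq> {}"
    proof
      assume "F = {}"
      then show False using cut conn unfolding is_cut_def by simp
    qed
    then obtain f where f: "f \<in> F" by blast
    then obtain a b where ab: "f = {a,b}" "a \<in> A" "b \<notin> A" using cross by blast
    have abV: "a \<in> V" "b \<in> V" using wf_edge2[OF wfE, of a b] ab f FE by auto
    have "F - {f} \<subset> F" using f by blast
    then have "\<not> is_cut V E (F - {f})" using mc unfolding is_min_cut_def by blast
    then have cn: "connected_graph V (E - (F - {f}))" using FE unfolding is_cut_def by blast
    have sub: "E - (F - {f}) \<subseteq> ?E \<union> {{a,b}}" using ab by blast
    have "components V ?E \<subseteq> {cp a, cp b}"
    proof
      fix C assume "C \<in> components V ?E"
      then obtain s where s: "s \<in> V" "C = cp s" unfolding comps by blast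
      have "reach (E - (F - {f})) s a" using cn s abV unfolding connected_graph_def by blast
      then have "reach ?E s a \<or> reach ?E s b" using split2[OF _ sub] by blast
      then show "C \<in> {cp a, cp b}" using cp_eq s by blast
    qed
    moreover have "cp a \<noteq> cp b"
    proof
      assume e: "cp a = cp b"
      have "a \<in> cp a" unfolding cp_def using abV by simp
      then have "a \<in> cp b" using e by simp
      then have "reach ?E b a" unfolding cp_def by blast
      then show False using rA ab by blast
    qed
    moreover have "cp a \<in> components V ?E" "cp b \<in> components V ?E" using cpc abV by auto
    ultimately have "components V ?E = {cp a, cp b}" by (intro equalityI) auto
    then show "card (components V ?E) = 2" using \<open>cp a \<noteq> cp b\<close> by simp
  next
    assume c2: "card (components V ?E) = 2"
    have fin: "finite (components V ?E)" using c2 by (metis card.infinite zero_neq_numeral)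
    have sub: "{cp x, cp y} \<subseteq> components V ?E" using cpc xA yA by auto
    have eq: "components V ?E = {cp x, cp y}"
      using card_subset_eq[OF fin sub] c2 cxy by simp
    have cov: "\<And>z. z \<in> V \<Longrightarrow> reach ?E x z \<or> reach ?E y z"
    proof -
      fix z assume z: "z \<in> V"
      then have "cp z \<in> {cp x, cp y}" using cpc eq by blast
      moreover have "z \<in> cp z" unfolding cp_def using z by simp
      ultimately have "z \<in> cp x \<or> z \<in> cp y" by auto
      then show "reach ?E x z \<or> reach ?E y z" unfolding cp_def by blast
    qed
    show "is_min_cut V E F" unfolding is_min_cut_def
    proof (intro conjI allI impI cut)
      fix F' assume F': "F' \<subset> F"
      then obtain f where f: "f \<in> F" "f \<notin> F'" by blast
      then obtain a b where ab: "f = {a,b}" "a \<in> A" "b \<notin> A" using cross by blast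
      have abV: "a \<in> V" "b \<in> V" using wf_edge2[OF wfE, of a b] ab f FE by auto
      have ra: "reach ?E x a"
      proof -
        have "\<not> reach ?E y a" using rA ab yA by blast
        then show ?thesis using cov abV by blast
      qed
      have rb: "reach ?E y b"
      proof -
        have "\<not> reach ?E x b" using rA ab xA by blast
        then show ?thesis using cov abV by blast
      qed
      have sub2: "?E \<subseteq> E - F'" using F' by blast
      have fe: "{a,b} \<in> E - F'" using ab f FE by blast
      have rxy: "reach (E - F') x y"
      proof -
        have "reach (E - F') x a" using reach_mono[OF ra sub2] .
        moreover have "reach (E - F') b y" using reach_sym[OF reach_mono[OF rb sub2]] .
        ultimately show ?thesis using reach_edge[OF fe] reach_trans by metis
      qed
      have rz: "\<And>z. z \<in> V \<Longrightarrow> reach (E - F') x z"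
      proof -
        fix z assume "z \<in> V"
        then consider "reach ?E x z" | "reach ?E y z" using cov by blast
        then show "reach (E - F') x z"
        proof cases
          case 1 then show ?thesis using reach_mono[OF _ sub2] by blast
        next
          case 2 then show ?thesis using reach_mono[OF _ sub2] reach_trans[OF rxy] by blast
        qed
      qed
      have "connected_graph V (E - F')" unfolding connected_graph_def
      proof (intro conjI ballI)
        show "V \<noteq> {}" using xA by blast
      next
        fix s t assume "s \<in> V" "t \<in> V"
        then show "reach (E - F') s t" using rz reach_sym reach_trans by metis
      qed
      then show "\<not> is_cut V E F'" unfolding is_cut_def by blast
    qed
  qed
  then show ?thesis using cut by blast
qed


lemma S_sides:
  assumes phS: "phylo_tree S" and e: "e \<in> snd S"
  shows "\<exists>u v. e = {u,v} \<and> side_labels S e u \<inter> side_labels S e v = {}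
     \<and> leaves S \<subseteq> side_labels S e u \<union> side_labels S e v
     \<and> side_labels S e u \<noteq> {} \<and> side_labels S e v \<noteq> {}"
proof -
  have tr: "is_tree (fst S) (snd S)" using phS unfolding phylo_tree_def by blast
  have wS: "wf_graph (fst S) (snd S)" using tr unfolding is_tree_def by blast
  obtain u v where uv: "e = {u,v}" "u \<noteq> v" "u \<in> fst S" "v \<in> fst S" using wf_edge[OF wS e] by blast
  let ?E = "snd S - {e}"
  have disj: "side_labels S e u \<inter> side_labels S e v = {}"
  proof (rule ccontr)
    assume "\<not> ?thesis"
    then obtain l where "reach ?E u l" "reach ?E v l" unfolding side_labels_def by blast
    then have "reach ?E u v" using reach_trans[of ?E u l v] reach_sym[of ?E v l] by blast
    then show False using tree_sep[OF tr] e uv by blast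
  qed
  have cov: "leaves S \<subseteq> side_labels S e u \<union> side_labels S e v"
  proof
    fix l assume l: "l \<in> leaves S"
    then have "l \<in> fst S" unfolding leaves_def by blast
    then have "reach (snd S) l u" using tr uv unfolding is_tree_def connected_graph_def by blast
    moreover have "snd S \<subseteq> ?E \<union> {{u,v}}" using uv by blast
    ultimately have "reach ?E l u \<or> reach ?E l v" using split2 by metis
    then have "reach ?E u l \<or> reach ?E v l" using reach_sym by metis
    then show "l \<in> side_labels S e u \<union> side_labels S e v" using l unfolding side_labels_def by blast
  qed
  have D: "{e} \<subseteq> snd S" "card {e} \<le> 2" using e by auto
  have "side_labels S e u \<noteq> {}" using leaf_reach[OF phS D uv(3)] unfolding side_labels_def by blast
  moreover have "side_labels S e v \<noteq> {}" using leaf_reach[OF phS D uv(4)] unfolding side_labels_def by blast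
  ultimately show ?thesis using uv disj cov by blast
qed

lemma Psi_norm:
  assumes e: "e = {u,v}" and f: "f \<in> Psi P S e"
  shows "\<exists>T\<in>P. f \<in> snd T \<and> (\<exists>a b. f = {a,b} \<and> leaves T \<inter> side_labels S e u \<noteq> {}
      \<and> leaves T \<inter> side_labels S e v \<noteq> {}
      \<and> side_labels T f a = leaves T \<inter> side_labels S e u \<and> side_labels T f b = leaves T \<inter> side_labels S e v)"
proof -
  obtain T u' v' a b where T: "T \<in> P" "f \<in> snd T" "e = {u', v'}" "f = {a, b}"
    "leaves T \<inter> side_labels S e u' \<noteq> {}" "leaves T \<inter> side_labels S e v' \<noteq> {}"
    "side_labels T f a = leaves T \<inter> side_labels S e u'" "side_labels T f b = leaves T \<inter> side_labels S e v'"
    using f unfolding Psi_def by blast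
  have "u' = u \<and> v' = v \<or> u' = v \<and> v' = u" using e T(3) by (simp add: doubleton_eq_iff)
  then show ?thesis
  proof
    assume "u' = u \<and> v' = v" then show ?thesis using T by blast
  next
    assume h: "u' = v \<and> v' = u"
    have "f = {b,a}" using T(4) by (simp add: insert_commute)
    then show ?thesis using T h by blast
  qed
qed

lemma Psi_intro:
  assumes "T \<in> P" "{a,b} \<in> snd T" "e = {u,v}" "leaves T \<inter> side_labels S e u \<noteq> {}"
    "leaves T \<inter> side_labels S e v \<noteq> {}"
    "side_labels T {a,b} a = leaves T \<inter> side_labels S e u"
    "side_labels T {a,b} b = leaves T \<inter> side_labels S e v"
  shows "{a,b} \<in> Psi P S e"
  unfolding Psi_def using assms by blast


lemma per_edge:
  assumes prof: "profile P" and conn: "connected_graph (dg_V P) (dg_E P)"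
    and ag: "agreement_supertree P S" and e: "e \<in> snd S"
  shows "is_cut (dg_V P) (dg_E P) (Psi P S e) \<and>
     (is_min_cut (dg_V P) (dg_E P) (Psi P S e) \<longleftrightarrow> card (components (dg_V P) (dg_E P - Psi P S e)) = 2)"
proof -
  have phS: "phylo_tree S" and lS: "leaves S = labels P" and agT: "\<And>T. T \<in> P \<Longrightarrow> agrees S T"
    using ag unfolding agreement_supertree_def by auto
  have phT: "\<And>T. T \<in> P \<Longrightarrow> phylo_tree T" using prof unfolding profile_def by blast
  have shared: "\<And>T1 T2. T1 \<in> P \<Longrightarrow> T2 \<in> P \<Longrightarrow> T1 \<noteq> T2 \<Longrightarrow> fst T1 \<inter> fst T2 \<subseteq> leaves T1 \<inter> leaves T2"
    using prof unfolding profile_def by blast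
  have trT: "\<And>T. T \<in> P \<Longrightarrow> is_tree (fst T) (snd T)" using phT unfolding phylo_tree_def by blast
  have wT: "\<And>T. T \<in> P \<Longrightarrow> wf_graph (fst T) (snd T)" using trT unfolding is_tree_def by blast
  obtain u v where uv: "e = {u,v}" and disj: "side_labels S e u \<inter> side_labels S e v = {}"
     and cov: "leaves S \<subseteq> side_labels S e u \<union> side_labels S e v"
     and neu: "side_labels S e u \<noteq> {}" and nev: "side_labels S e v \<noteq> {}"
    using S_sides[OF phS e] by blast
  define Lu where "Lu = side_labels S e u"
  define Lv where "Lv = side_labels S e v"
  define F where "F = Psi P S e"
  define V where "V = dg_V P"
  define E where "E = dg_E P"
  have labT: "\<And>T. T \<in> P \<Longrightarrow> leaves T \<subseteq> leaves S" using lS unfolding labels_def by blast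
  have leafT: "\<And>T w. T \<in> P \<Longrightarrow> w \<in> fst T \<Longrightarrow> w \<in> leaves S \<Longrightarrow> w \<in> leaves T"
  proof -
    fix T w assume T: "T \<in> P" "w \<in> fst T" "w \<in> leaves S"
    then obtain T1 where T1: "T1 \<in> P" "w \<in> leaves T1" using lS unfolding labels_def by blast
    show "w \<in> leaves T"
    proof (cases "T1 = T")
      case True then show ?thesis using T1 by simp
    next
      case False
      have "w \<in> fst T1" using T1 unfolding leaves_def by blast
      then show ?thesis using shared[OF T(1) T1(1)] False T by blast
    qed
  qed
  have K: "\<And>T l1 l2. T \<in> P \<Longrightarrow> l1 \<in> leaves T \<Longrightarrow> l2 \<in> leaves T \<Longrightarrow> reach (snd T - F) l1 l2
       \<Longrightarrow> l1 \<in> Lu \<Longrightarrow> l2 \<in> Lu"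
  proof (rule ccontr)
    fix T l1 l2 assume T: "T \<in> P" and l: "l1 \<in> leaves T" "l2 \<in> leaves T" "reach (snd T - F) l1 l2"
      "l1 \<in> Lu" and n: "l2 \<notin> Lu"
    have "l2 \<in> Lv" using n cov labT[OF T] l(2) unfolding Lu_def Lv_def by blast
    then obtain a b where ab: "{a,b} \<in> snd T" "side_labels T {a,b} a = leaves T \<inter> Lu"
      "side_labels T {a,b} b = leaves T \<inter> Lv"
      using split_exists[OF phS uv phT[OF T] agT[OF T] l(1) _ l(2) _ disj cov] l(4)
      unfolding Lu_def Lv_def by blast
    have "{a,b} \<in> F" unfolding F_def
      using Psi_intro[OF T ab(1) uv] ab l \<open>l2 \<in> Lv\<close> unfolding Lu_def Lv_def by blast
    then have "snd T - F \<subseteq> snd T - {{a,b}}" by blast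
    then have r: "reach (snd T - {{a,b}}) l1 l2" using reach_mono l(3) by metis
    have "l1 \<in> side_labels T {a,b} a" using ab l by blast
    then have "reach (snd T - {{a,b}}) a l1" using side_reach by metis
    then have "reach (snd T - {{a,b}}) a l2" using reach_trans r by metis
    then have "l2 \<in> side_labels T {a,b} a" using side_in l(2) by metis
    then show False using ab n by blast
  qed
  define A where "A = {w. \<exists>T\<in>P. w \<in> fst T \<and> (\<exists>l\<in>leaves T \<inter> Lu. reach (snd T - F) w l)}"
  have wfE: "wf_graph V E" unfolding wf_graph_def V_def E_def dg_V_def dg_E_def
  proof
    fix g assume "g \<in> (\<Union>T\<in>P. snd T)"
    then obtain T where "T \<in> P" "g \<in> snd T" by blast
    then show "\<exists>a b. g = {a, b} \<and> a \<noteq> b \<and> a \<in> (\<Union>T\<in>P. fst T) \<and> b \<in> (\<Union>T\<in>P. fst T)"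
      using wf_edge[OF wT[of T], of g] by blast
  qed
  have FE: "F \<subseteq> E"
  proof
    fix f assume "f \<in> F"
    then obtain T where "T \<in> P" "f \<in> snd T" unfolding F_def Psi_def by blast
    then show "f \<in> E" unfolding E_def dg_E_def by blast
  qed
  obtain x where x: "x \<in> Lu" using neu unfolding Lu_def by blast
  obtain y where y: "y \<in> Lv" using nev unfolding Lv_def by blast
  have xS: "x \<in> leaves S" using x unfolding Lu_def side_labels_def by blast
  have yS: "y \<in> leaves S" using y unfolding Lv_def side_labels_def by blast
  have "x \<in> (\<Union>T\<in>P. leaves T)" using xS lS unfolding labels_def by simp
  then obtain Tx where Tx: "Tx \<in> P" "x \<in> leaves Tx" by blast
  have "y \<in> (\<Union>T\<in>P. leaves T)" using yS lS unfolding labels_def by simp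
  then obtain Ty where Ty: "Ty \<in> P" "y \<in> leaves Ty" by blast
  have xT: "x \<in> fst Tx" using Tx(2) unfolding leaves_def by blast
  have yT: "y \<in> fst Ty" using Ty(2) unfolding leaves_def by blast
  have xV: "x \<in> V" using Tx(1) xT unfolding V_def dg_V_def by blast
  have yV: "y \<in> V" using Ty(1) yT unfolding V_def dg_V_def by blast
  have "x \<in> leaves Tx \<inter> Lu \<and> reach (snd Tx - F) x x" using Tx x by simp
  then have xA: "x \<in> A" unfolding A_def using Tx(1) xT by blast
  have yA: "y \<notin> A"
  proof
    assume "y \<in> A"
    then obtain T l where T: "T \<in> P" "y \<in> fst T" "l \<in> leaves T" "l \<in> Lu" "reach (snd T - F) y l"
      unfolding A_def by blast
    have "y \<in> leaves T" using leafT[OF T(1) T(2) yS] .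
    then have "y \<in> Lu" using K[OF T(1) T(3) _ reach_sym[OF T(5)] T(4)] by blast
    then show False using y disj unfolding Lu_def Lv_def by blast
  qed
  have closed: "\<forall>w w'. {w,w'} \<in> E - F \<longrightarrow> w \<in> A \<longrightarrow> w' \<in> A"
  proof (intro allI impI)
    fix w w' assume ww: "{w,w'} \<in> E - F" and wA: "w \<in> A"
    obtain T where T: "T \<in> P" "{w,w'} \<in> snd T" using ww unfolding E_def dg_E_def by blast
    have wT': "w \<in> fst T" "w' \<in> fst T" using wf_edge2[OF wT[OF T(1)] T(2)] by auto
    have sw: "{w',w} = {w,w'}" by (rule insert_commute)
    have "{w,w'} \<notin> F" using ww by blast
    then have eT: "{w',w} \<in> snd T - F" using T(2) unfolding sw by blast
    obtain T' l where T': "T' \<in> P" "w \<in> fst T'" "l \<in> leaves T'" "l \<in> Lu" "reach (snd T' - F) w l"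
      using wA unfolding A_def by blast
    show "w' \<in> A"
    proof (cases "T' = T")
      case True
      then have "reach (snd T - F) w l" using T'(5) by simp
      then have "reach (snd T - F) w' l" using reach_trans[OF reach_edge[OF eT]] by blast
      moreover have "l \<in> leaves T \<inter> Lu" using T' True by simp
      ultimately show ?thesis unfolding A_def using T(1) wT' by blast
    next
      case False
      have "w \<in> fst T \<inter> fst T'" using wT' T' by blast
      then have wl: "w \<in> leaves T" "w \<in> leaves T'" using shared[OF T(1) T'(1)] False by blast+
      have "w \<in> Lu" using K[OF T'(1) T'(3) wl(2) reach_sym[OF T'(5)] T'(4)] .
      moreover have "reach (snd T - F) w' w" using reach_edge[OF eT] .
      ultimately have "w \<in> leaves T \<inter> Lu \<and> reach (snd T - F) w' w" using wl by blast
      then show ?thesis unfolding A_def using T(1) wT' by blast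
    qed
  qed
  have cross: "\<forall>f\<in>F. \<exists>a b. f = {a,b} \<and> a \<in> A \<and> b \<notin> A"
  proof
    fix f assume f: "f \<in> F"
    obtain T a b where T: "T \<in> P" "f \<in> snd T" "f = {a,b}" "leaves T \<inter> Lu \<noteq> {}"
      "side_labels T f a = leaves T \<inter> Lu" "side_labels T f b = leaves T \<inter> Lv"
      using Psi_norm[OF uv, of f P S] f unfolding F_def Lu_def Lv_def by blast
    have XY: "(leaves T \<inter> Lu) \<inter> (leaves T \<inter> Lv) = {}" using disj unfolding Lu_def Lv_def by blast
    have uniq: "\<And>g. g \<in> snd T \<Longrightarrow> g \<in> F \<Longrightarrow> g = f"
    proof -
      fix g assume g: "g \<in> snd T" "g \<in> F"
      obtain T2 a2 b2 where T2: "T2 \<in> P" "g \<in> snd T2" "g = {a2,b2}"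
        "side_labels T2 g a2 = leaves T2 \<inter> Lu" "side_labels T2 g b2 = leaves T2 \<inter> Lv"
        using Psi_norm[OF uv, of g P S] g unfolding F_def Lu_def Lv_def by blast
      show "g = f"
      proof (cases "T2 = T")
        case True
        have "{a,b} = {a2,b2}"
          using split_unique[OF phT[OF T(1)], of a b a2 b2] T T2 True XY by simp
        then show ?thesis using T T2 by simp
      next
        case False
        have ab2: "a2 \<in> fst T" "b2 \<in> fst T" "a2 \<in> fst T2" "b2 \<in> fst T2"
          using wf_edge2[OF wT[OF T(1)], of a2 b2] wf_edge2[OF wT[OF T2(1)], of a2 b2] g T2 by auto
        have "a2 \<in> leaves T" "b2 \<in> leaves T" using shared[OF T(1) T2(1)] False ab2 by auto
        then have dg: "degree (snd T) a2 \<le> 1" "degree (snd T) b2 \<le> 1" unfolding leaves_def by auto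
        have fin: "finite (snd T)" using wf_finite wT[OF T(1)] trT[OF T(1)] unfolding is_tree_def by blast
        have cT: "connected_graph (fst T) (snd T)" using trT[OF T(1)] unfolding is_tree_def by blast
        have "snd T = {{a2,b2}}" using two_leaf_edge[OF wT[OF T(1)] fin cT _ dg] g T2 by simp
        then show ?thesis using T(2) T2(3) by simp
      qed
    qed
    have TF: "snd T - F = snd T - {f}" using uniq f by blast
    obtain l where l: "l \<in> leaves T \<inter> Lu" using T(4) by blast
    have "l \<in> side_labels T f a" using T(5) l by simp
    then have "reach (snd T - F) a l" unfolding TF using side_reach by metis
    moreover have aT: "a \<in> fst T" using wf_edge2[OF wT[OF T(1)], of a b] T by simp
    ultimately have aA: "a \<in> A" unfolding A_def using T(1) l by blast
    have bT: "b \<in> fst T" using wf_edge2[OF wT[OF T(1)], of a b] T by simp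
    have bA: "b \<notin> A"
    proof
      assume "b \<in> A"
      then obtain T' l' where T': "T' \<in> P" "b \<in> fst T'" "l' \<in> leaves T'" "l' \<in> Lu" "reach (snd T' - F) b l'"
        unfolding A_def by blast
      show False
      proof (cases "T' = T")
        case True
        then have "reach (snd T - {f}) b l'" using T' TF by simp
        then have "l' \<in> side_labels T f b" using side_in T' True by metis
        then show False using T(6) T' disj unfolding Lu_def Lv_def by blast
      next
        case False
        have bl: "b \<in> leaves T" "b \<in> leaves T'" using shared[OF T(1) T'(1)] False bT T' by auto
        have "b \<in> Lu" using K[OF T'(1) T'(3) bl(2) reach_sym[OF T'(5)] T'(4)] .
        moreover have "b \<in> side_labels T f b" using side_in[of T f b b] bl by simp
        ultimately show False using T(6) disj unfolding Lu_def Lv_def by blast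
      qed
    qed
    show "\<exists>a b. f = {a,b} \<and> a \<in> A \<and> b \<notin> A" using T(3) aA bA by blast
  qed
  have "is_cut V E F \<and> (is_min_cut V E F \<longleftrightarrow> card (components V (E - F)) = 2)"
    using graph_cut[OF conn[folded V_def E_def] wfE FE xA xV yA yV closed cross] .
  then show ?thesis unfolding V_def E_def F_def .
qed

theorem lemma13:
  fixes P :: "'v graph set" and S :: "'v graph"
  assumes "profile P"
    and "connected_graph (dg_V P) (dg_E P)"
    and "agreement_supertree P S"
  shows "(\<forall>e\<in>snd S. is_cut (dg_V P) (dg_E P) (Psi P S e))
       \<and> (\<forall>e\<in>snd S. is_min_cut (dg_V P) (dg_E P) (Psi P S e) \<longleftrightarrow>
                     card (components (dg_V P) (dg_E P - Psi P S e)) = 2)"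
  using per_edge[OF assms] by blast


end
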